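(* Let $F$ be an $(\mathbb{F}_q,\mathbb{Z})$-field and $K\subseteq F$ a subfield which is an $(\mathbb{F}_{q'},\mathbb{Z})$-field. Let $A=\{(x,y,z)\in F^3:\mathrm{ord}\,z=\mathrm{ord}(y-x)\}$ and let $\Pi:A\to F^2$, $(x,y,z)\mapsto(x,y)$. Then there is no $\mathcal{L}_K$-definable function $f:\Pi(A)\to A$ with $\Pi\circ f=\mathrm{Id}_{\Pi(A)}$.
   Context: $\mathrm{ord}$ is the valuation of $F$, with $\mathrm{ord}\,0=+\infty$. $\mathcal{L}_K=\{\bar c\}_{c\in K}\cup\mathcal{L}_{\mathrm{dist}}'$, where $\bar c$ is the function $x\mapsto cx$ and $\mathcal{L}_{\mathrm{dist}}'=(\{D^{(4)}_j\}_{j\in\mathbb{Z}},\{R_{n,m}\}_{n,m>0})$ with $D^{(4)}_j(x,y,z,t)\Leftrightarrow\mathrm{ord}(x-y)<\mathrm{ord}(z-t)+j\cdot\mathrm{ord}\,\pi$ ($\pi$ of smallest positive order), $R_{n,m}(x,y,z)\Leftrightarrow y-x\in zQ_{n,m}$, where $Q_{n,m}=\{x\in P_n(1+\mathcal{M}_F^m):\mathrm{ac}_m(x)=1\}$, $P_n$ the nonzero $n$-th powers and $\mathrm{ac}_m:F^\times\to(\mathcal{O}_F/\pi^m)^\times$ the unique homomorphism with $\mathrm{ac}_m(\pi)=1$, $\mathrm{ac}_m(u)\equiv u\bmod\pi^m$ for units $u$. Definable = with parameters from $F$. *)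

theory Defs
  imports Complex_Main "HOL-Library.Extended_Real" "HOL-Computational_Algebra.Polynomial"
begin

text \<open>A valuation is a map ord into the extended reals, ord 0 = +infinity.
  All notions below are relative to a subset S (a subfield) of the ambient field,
  with the restriction of ord to S.\<close>

definition subfield :: "'a::field set \<Rightarrow> bool" where
  "subfield S \<longleftrightarrow> 0 \<in> S \<and> 1 \<in> S \<and> (\<forall>x\<in>S. \<forall>y\<in>S. x + y \<in> S \<and> x * y \<in> S)
     \<and> (\<forall>x\<in>S. - x \<in> S \<and> inverse x \<in> S)"

definition is_valuation_on :: "'a::field set \<Rightarrow> ('a \<Rightarrow> ereal) \<Rightarrow> bool" where
  "is_valuation_on S ord \<longleftrightarrow>
     (\<forall>x\<in>S. ord x = \<infinity> \<longleftrightarrow> x = 0) \<and>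
     (\<forall>x\<in>S. ord x \<noteq> - \<infinity>) \<and>
     (\<forall>x\<in>S. \<forall>y\<in>S. ord (x * y) = ord x + ord y) \<and>
     (\<forall>x\<in>S. \<forall>y\<in>S. min (ord x) (ord y) \<le> ord (x + y))"

definition valring :: "'a::field set \<Rightarrow> ('a \<Rightarrow> ereal) \<Rightarrow> 'a set" where
  "valring S ord = {x \<in> S. 0 \<le> ord x}"

definition value_group_Z :: "'a::field set \<Rightarrow> ('a \<Rightarrow> ereal) \<Rightarrow> bool" where
  "value_group_Z S ord \<longleftrightarrow>
     (\<exists>e::real. e > 0 \<and> ord ` (S - {0}) = range (\<lambda>k::int. ereal (e * of_int k)))"

text \<open>Residue field O_S / M_S has exactly q elements.\<close>
definition residue_card :: "'a::field set \<Rightarrow> ('a \<Rightarrow> ereal) \<Rightarrow> nat \<Rightarrow> bool" where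
  "residue_card S ord q \<longleftrightarrow>
     (\<exists>R. R \<subseteq> valring S ord \<and> finite R \<and> card R = q \<and>
        (\<forall>x\<in>valring S ord. \<exists>!r\<in>R. 0 < ord (x - r)))"

definition henselian_on :: "'a::field set \<Rightarrow> ('a \<Rightarrow> ereal) \<Rightarrow> bool" where
  "henselian_on S ord \<longleftrightarrow>
     (\<forall>p::'a poly. \<forall>a\<in>valring S ord.
        set (coeffs p) \<subseteq> valring S ord \<longrightarrow> 0 < ord (poly p a) \<longrightarrow>
        ord (poly (pderiv p) a) = 0 \<longrightarrow>
        (\<exists>b\<in>valring S ord. poly p b = 0 \<and> 0 < ord (b - a)))"

text \<open>(F_q,Z)-field: henselian valued field of characteristic 0 (characteristic 0 is
  imposed by the type class of the ambient field), value group Z, residue field F_q.\<close>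
definition FqZ_field :: "'a::field_char_0 set \<Rightarrow> ('a \<Rightarrow> ereal) \<Rightarrow> nat \<Rightarrow> bool" where
  "FqZ_field S ord q \<longleftrightarrow> subfield S \<and> is_valuation_on S ord \<and> value_group_Z S ord \<and>
     residue_card S ord q \<and> henselian_on S ord"

definition uniformizer :: "('a::field \<Rightarrow> ereal) \<Rightarrow> 'a \<Rightarrow> bool" where
  "uniformizer ord \<pi> \<longleftrightarrow> 0 < ord \<pi> \<and> (\<forall>x. 0 < ord x \<longrightarrow> ord \<pi> \<le> ord x)"

text \<open>ac_m(x) = 1: writing x = pi^k u with u a unit, u = 1 mod pi^m.\<close>
definition ac_one :: "('a::field \<Rightarrow> ereal) \<Rightarrow> 'a \<Rightarrow> nat \<Rightarrow> 'a \<Rightarrow> bool" where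
  "ac_one ord \<pi> m x \<longleftrightarrow>
     (\<exists>k::int. ord x = ereal (of_int k) * ord \<pi> \<and>
        ereal (of_nat m) * ord \<pi> \<le> ord (x * \<pi> powi (- k) - 1))"

definition Qset :: "('a::field \<Rightarrow> ereal) \<Rightarrow> 'a \<Rightarrow> nat \<Rightarrow> nat \<Rightarrow> 'a set" where
  "Qset ord \<pi> n m = {x. (\<exists>a u. a \<noteq> 0 \<and> ereal (of_nat m) * ord \<pi> \<le> ord (u - 1) \<and> x = a ^ n * u)
                        \<and> ac_one ord \<pi> m x}"

datatype 'a tm = Var nat | Scal 'a "'a tm"

datatype 'a fm =
    Eq "'a tm" "'a tm"
  | Dj int "'a tm" "'a tm" "'a tm" "'a tm"
  | Rnm nat nat "'a tm" "'a tm" "'a tm"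
  | Neg "'a fm"
  | Conj "'a fm" "'a fm"
  | Ex nat "'a fm"

primrec tm_scalars :: "'a tm \<Rightarrow> 'a set" where
  "tm_scalars (Var i) = {}"
| "tm_scalars (Scal c t) = insert c (tm_scalars t)"

primrec wf_LK :: "'a set \<Rightarrow> 'a fm \<Rightarrow> bool" where
  "wf_LK K (Eq s t) = (tm_scalars s \<union> tm_scalars t \<subseteq> K)"
| "wf_LK K (Dj j x y z t) = (tm_scalars x \<union> tm_scalars y \<union> tm_scalars z \<union> tm_scalars t \<subseteq> K)"
| "wf_LK K (Rnm n m x y z) = (0 < n \<and> 0 < m \<and> tm_scalars x \<union> tm_scalars y \<union> tm_scalars z \<subseteq> K)"
| "wf_LK K (Neg \<phi>) = wf_LK K \<phi>"
| "wf_LK K (Conj \<phi> \<psi>) = (wf_LK K \<phi> \<and> wf_LK K \<psi>)"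
| "wf_LK K (Ex i \<phi>) = wf_LK K \<phi>"

primrec eval_tm :: "(nat \<Rightarrow> 'a::field) \<Rightarrow> 'a tm \<Rightarrow> 'a" where
  "eval_tm \<sigma> (Var i) = \<sigma> i"
| "eval_tm \<sigma> (Scal c t) = c * eval_tm \<sigma> t"

primrec sat :: "('a::field \<Rightarrow> ereal) \<Rightarrow> 'a \<Rightarrow> (nat \<Rightarrow> 'a) \<Rightarrow> 'a fm \<Rightarrow> bool" where
  "sat ord \<pi> \<sigma> (Eq s t) = (eval_tm \<sigma> s = eval_tm \<sigma> t)"
| "sat ord \<pi> \<sigma> (Dj j x y z t) =
     (ord (eval_tm \<sigma> x - eval_tm \<sigma> y) < ord (eval_tm \<sigma> z - eval_tm \<sigma> t) + ereal (of_int j) * ord \<pi>)"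
| "sat ord \<pi> \<sigma> (Rnm n m x y z) =
     (eval_tm \<sigma> y - eval_tm \<sigma> x \<in> (\<lambda>w. eval_tm \<sigma> z * w) ` Qset ord \<pi> n m)"
| "sat ord \<pi> \<sigma> (Neg \<phi>) = (\<not> sat ord \<pi> \<sigma> \<phi>)"
| "sat ord \<pi> \<sigma> (Conj \<phi> \<psi>) = (sat ord \<pi> \<sigma> \<phi> \<and> sat ord \<pi> \<sigma> \<psi>)"
| "sat ord \<pi> \<sigma> (Ex i \<phi>) = (\<exists>a. sat ord \<pi> (\<sigma>(i := a)) \<phi>)"

text \<open>X \<subseteq> F^n (tuples as lists of length n) is L_K-definable with parameters from F:
  variables 0..n-1 are the tuple, the remaining variables are assigned parameters.\<close>
definition LK_definable :: "'a::field set \<Rightarrow> ('a \<Rightarrow> ereal) \<Rightarrow> 'a \<Rightarrow> nat \<Rightarrow> 'a list set \<Rightarrow> bool" where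
  "LK_definable K ord \<pi> n X \<longleftrightarrow> X \<subseteq> {xs. length xs = n} \<and>
     (\<exists>\<phi> (e :: nat \<Rightarrow> 'a). wf_LK K \<phi> \<and>
        (\<forall>xs. length xs = n \<longrightarrow> (xs \<in> X \<longleftrightarrow> sat ord \<pi> (\<lambda>i. if i < n then xs ! i else e i) \<phi>)))"

end

theory Submission imports Defs begin
definition ufilt :: "nat set set \<Rightarrow> bool" where
  "ufilt U \<longleftrightarrow> (\<forall>A B. A \<in> U \<longrightarrow> A \<subseteq> B \<longrightarrow> B \<in> U) \<and> (\<forall>A B. A \<in> U \<longrightarrow> B \<in> U \<longrightarrow> A \<inter> B \<in> U)
     \<and> {} \<notin> U \<and> (\<forall>A. A \<in> U \<or> - A \<in> U) \<and> (\<forall>A. finite (- A) \<longrightarrow> A \<in> U)"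

definition filtset :: "nat set set set" where
  "filtset = {F. (\<forall>A B. A \<in> F \<longrightarrow> A \<subseteq> B \<longrightarrow> B \<in> F) \<and> (\<forall>A B. A \<in> F \<longrightarrow> B \<in> F \<longrightarrow> A \<inter> B \<in> F)
     \<and> {} \<notin> F \<and> {A. finite (- A)} \<subseteq> F}"

lemma cofin_in: "{A::nat set. finite (- A)} \<in> filtset"
proof -
  have "A \<inter> B \<in> {A. finite (- A)}" if "A \<in> {A. finite (- A)}" "B \<in> {A. finite (- A)}" for A B
    using that by (simp add: Compl_Int)
  moreover have "B \<in> {A. finite (- A)}" if "A \<in> {A. finite (- A)}" "A \<subseteq> B" for A B
    using that by (auto intro: finite_subset)
  ultimately show ?thesis unfolding filtset_def by auto
qed

lemma ufilt_exists: "\<exists>U. ufilt U"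
proof -
  have "\<forall>C\<in>chains filtset. \<exists>U\<in>filtset. \<forall>X\<in>C. X \<subseteq> U"
  proof
    fix C assume C: "C \<in> chains filtset"
    show "\<exists>U\<in>filtset. \<forall>X\<in>C. X \<subseteq> U"
    proof (cases "C = {}")
      case True then show ?thesis using cofin_in by auto
    next
      case False
      have sub: "C \<subseteq> filtset" and ch: "\<forall>X\<in>C. \<forall>Y\<in>C. X \<subseteq> Y \<or> Y \<subseteq> X"
        using C by (auto simp: chains_def chain_subset_def)
      have "\<Union>C \<in> filtset"
        unfolding filtset_def
      proof (intro CollectI conjI allI impI)
        fix A B assume "A \<in> \<Union>C" "A \<subseteq> B" then show "B \<in> \<Union>C"
          using sub unfolding filtset_def by blast
      next
        fix A B assume a: "A \<in> \<Union>C" "B \<in> \<Union>C"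
        then obtain X Y where XY: "X \<in> C" "Y \<in> C" "A \<in> X" "B \<in> Y" by blast
        show "A \<inter> B \<in> \<Union>C"
        proof (cases "X \<subseteq> Y")
          case True then show ?thesis using XY sub unfolding filtset_def by blast
        next
          case False then have "Y \<subseteq> X" using ch XY by blast
          then show ?thesis using XY sub unfolding filtset_def by blast
        qed
      next
        show "{} \<notin> \<Union>C" using sub unfolding filtset_def by blast
      next
        show "{A. finite (- A)} \<subseteq> \<Union>C" using sub False unfolding filtset_def by blast
      qed
      then show ?thesis by blast
    qed
  qed
  then obtain M where M: "M \<in> filtset" and mx: "\<forall>X\<in>filtset. M \<subseteq> X \<longrightarrow> X = M"
    using Zorn_Lemma2 by blast
  have Mp: "\<forall>A B. A \<in> M \<longrightarrow> A \<subseteq> B \<longrightarrow> B \<in> M" "\<forall>A B. A \<in> M \<longrightarrow> B \<in> M \<longrightarrow> A \<inter> B \<in> M"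
    "{} \<notin> M" "{A. finite (- A)} \<subseteq> M" using M unfolding filtset_def by auto
  have "A \<in> M \<or> - A \<in> M" for A
  proof (rule ccontr)
    assume na: "\<not> (A \<in> M \<or> - A \<in> M)"
    define N where "N = {B. \<exists>X\<in>M. X \<inter> A \<subseteq> B}"
    have "N \<in> filtset" unfolding filtset_def
    proof (intro CollectI conjI allI impI)
      fix B B' assume "B \<in> N" "B \<subseteq> B'" then show "B' \<in> N" unfolding N_def by blast
    next
      fix B B' assume "B \<in> N" "B' \<in> N"
      then obtain X X' where "X \<in> M" "X' \<in> M" "X \<inter> A \<subseteq> B" "X' \<inter> A \<subseteq> B'" unfolding N_def by blast
      then show "B \<inter> B' \<in> N" unfolding N_def using Mp(2) by (intro CollectI bexI[of _ "X \<inter> X'"]) auto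
    next
      show "{} \<notin> N"
      proof
        assume "{} \<in> N"
        then obtain X where "X \<in> M" "X \<inter> A \<subseteq> {}" unfolding N_def by blast
        then have "X \<subseteq> - A" by blast
        then show False using Mp(1) \<open>X \<in> M\<close> na by blast
      qed
    next
      show "{A. finite (- A)} \<subseteq> N" using Mp(4) unfolding N_def by blast
    qed
    moreover have "M \<subseteq> N" unfolding N_def by blast
    moreover have "A \<in> N" unfolding N_def using Mp(4) by (intro CollectI bexI[of _ UNIV]) auto
    ultimately show False using mx na by blast
  qed
  then have "ufilt M" using Mp unfolding ufilt_def by blast
  then show ?thesis by blast
qed

locale vsetup =
  fixes ord :: "'a::field_char_0 \<Rightarrow> ereal" and \<pi> :: 'a
  assumes val: "is_valuation_on UNIV ord"
    and Ppos: "0 < ord \<pi>" and Pfin: "ord \<pi> \<noteq> \<infinity>"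
begin

lemma ord_inf_iff: "ord x = \<infinity> \<longleftrightarrow> x = 0" using val unfolding is_valuation_on_def by blast
lemma ord_nminf: "ord x \<noteq> - \<infinity>" using val unfolding is_valuation_on_def by blast
lemma ord_mult: "ord (x * y) = ord x + ord y" using val unfolding is_valuation_on_def by blast
lemma ord_add: "min (ord x) (ord y) \<le> ord (x + y)" using val unfolding is_valuation_on_def by blast
lemma ord_zero[simp]: "ord 0 = \<infinity>" using ord_inf_iff by blast
lemma ord_fin: "x \<noteq> 0 \<Longrightarrow> \<bar>ord x\<bar> \<noteq> \<infinity>"
proof -
  assume "x \<noteq> 0"
  then have "ord x \<noteq> \<infinity>" "ord x \<noteq> - \<infinity>" using ord_inf_iff ord_nminf by auto
  then show ?thesis by (cases "ord x") auto
qed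

lemma ord_one[simp]: "ord 1 = 0"
proof -
  have "ord 1 = ord 1 + ord 1" using ord_mult[of 1 1] by simp
  moreover have "\<bar>ord 1\<bar> \<noteq> \<infinity>" using ord_fin by simp
  ultimately show ?thesis by (cases "ord 1") auto
qed

lemma ord_m1[simp]: "ord (-1) = 0"
proof -
  have "0 = ord (-1) + ord (-1)" using ord_mult[of "-1" "-1"] by simp
  moreover have "\<bar>ord (-1)\<bar> \<noteq> \<infinity>" using ord_fin by simp
  ultimately show ?thesis by (cases "ord (-1)") auto
qed

lemma ord_uminus[simp]: "ord (- x) = ord x"
  using ord_mult[of "-1" x] by simp

lemma ord_sym: "ord (x - y) = ord (y - x)"
  by (metis minus_diff_eq ord_uminus)

lemma ord_inverse: "x \<noteq> 0 \<Longrightarrow> ord (inverse x) = - ord x"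
proof -
  assume x: "x \<noteq> 0"
  have "0 = ord x + ord (inverse x)" using ord_mult[of x "inverse x"] x by simp
  moreover have "\<bar>ord x\<bar> \<noteq> \<infinity>" using ord_fin x by simp
  ultimately show ?thesis by (cases "ord x"; cases "ord (inverse x)") simp_all
qed

lemma ord_divide: "y \<noteq> 0 \<Longrightarrow> ord (x / y) = ord x - ord y"
proof -
  assume y: "y \<noteq> 0"
  have "ord (x / y) = ord x + - ord y" using ord_mult[of x "inverse y"] ord_inverse[OF y]
    by (simp add: divide_inverse)
  then show ?thesis by (simp add: minus_ereal_def)
qed

lemma ord_diff: "min (ord x) (ord y) \<le> ord (x - y)"
  using ord_add[of x "- y"] by simp

lemma ord_strict: "ord x < ord y \<Longrightarrow> ord (x + y) = ord x"
proof -
  assume a: "ord x < ord y"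
  have 1: "min (ord x) (ord y) \<le> ord (x + y)" by (rule ord_add)
  have 2: "min (ord (x + y)) (ord y) \<le> ord x" using ord_add[of "x + y" "- y"] by simp
  show ?thesis using 1 2 a by (auto simp: min_def split: if_splits)
qed

lemma ord_strict2: "ord (y - x) > ord x \<Longrightarrow> ord y = ord x"
  using ord_strict[of x "y - x"] by simp

lemma P_real: "\<exists>p. ord \<pi> = ereal p \<and> p > 0"
  using Ppos Pfin by (cases "ord \<pi>") auto

lemma pi_nz: "\<pi> \<noteq> 0" using Pfin by auto

lemma ord_power: "ord (\<pi> ^ k) = ereal (of_nat k) * ord \<pi>"
proof (induction k)
  case 0 then show ?case by simp
next
  case (Suc k)
  obtain p where p: "ord \<pi> = ereal p" using P_real by blast
  show ?case using Suc by (simp add: ord_mult p algebra_simps)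
qed

definition dk :: "nat \<Rightarrow> ereal" where "dk k = ereal (of_nat k) * ord \<pi>"

lemma dk_pos: "k \<ge> 1 \<Longrightarrow> dk k > 0"
  using P_real by (auto simp: dk_def)

lemma dk_fin: "\<exists>r. dk k = ereal r \<and> r \<ge> 0"
  using P_real by (auto simp: dk_def)

lemma dk_mono: "m \<le> k \<Longrightarrow> dk m \<le> dk k"
  using P_real by (auto simp: dk_def intro!: mult_right_mono)

lemma L1:
  assumes k: "k \<ge> 1" and h: "dk k + ord b \<le> ord (b' - b)"
  shows "ord b' = ord b"
proof (cases "b = 0")
  case True
  then have "ord b' = \<infinity>" using h dk_fin[of k] by auto
  then show ?thesis using True ord_inf_iff by simp
next
  case False
  obtain r where r: "dk k = ereal r" "r > 0" using dk_pos[OF k] dk_fin[of k] by auto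
  obtain s where s: "ord b = ereal s" using ord_fin[OF False] by (cases "ord b") auto
  have "ord (b' - b) > ord b" using h r s by (cases "ord (b' - b)") auto
  then show ?thesis by (rule ord_strict2)
qed

lemma L1z:
  assumes k: "k \<ge> 1" and h: "dk k + ord b \<le> ord (b' - b)"
  shows "b' = 0 \<longleftrightarrow> b = 0"
  using L1[OF assms] ord_inf_iff by metis

definition near :: "nat \<Rightarrow> 'a \<Rightarrow> bool" where "near m x \<longleftrightarrow> dk m \<le> ord (x - 1)"

lemma near_ord_nonneg: "near m x \<Longrightarrow> 0 \<le> ord x"
proof -
  assume "near m x"
  moreover obtain r where "dk m = ereal r" "r \<ge> 0" using dk_fin by blast
  ultimately have "0 \<le> ord (x - 1)" unfolding near_def by (metis order_trans zero_ereal_def ereal_less_eq(3))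
  then show ?thesis using ord_add[of "x - 1" 1] by (simp add: min_def split: if_splits)
qed

lemma near_ord0: "k \<ge> 1 \<Longrightarrow> near k v \<Longrightarrow> ord v = 0"
proof -
  assume k: "k \<ge> 1" and n: "near k v"
  have "ord (v - 1) > ord 1" using dk_pos[OF k] n unfolding near_def by simp
  then show ?thesis using ord_strict2[of 1 v] by simp
qed

lemma near_nz: "k \<ge> 1 \<Longrightarrow> near k v \<Longrightarrow> v \<noteq> 0"
  using near_ord0 by fastforce

lemma near_mono: "near k v \<Longrightarrow> m \<le> k \<Longrightarrow> near m v"
  unfolding near_def using dk_mono by (meson order_trans)

lemma near_mult:
  assumes x: "near m x" and v: "near k v" and km: "m \<le> k"
  shows "near m (x * v)"
proof -
  have eq: "x * v - 1 = x * (v - 1) + (x - 1)" by (simp add: algebra_simps)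
  have "dk m \<le> ord (x * (v - 1))"
  proof -
    have "ord (x * (v - 1)) = ord x + ord (v - 1)" by (rule ord_mult)
    moreover have "0 \<le> ord x" using near_ord_nonneg[OF x] .
    moreover have "dk m \<le> ord (v - 1)" using v dk_mono[OF km] unfolding near_def by (meson order_trans)
    ultimately have "0 + dk m \<le> ord x + ord (v - 1)" by (intro add_mono) auto
    then show ?thesis using \<open>ord (x * (v - 1)) = ord x + ord (v - 1)\<close> by simp
  qed
  moreover have "dk m \<le> ord (x - 1)" using x unfolding near_def .
  ultimately have "dk m \<le> min (ord (x * (v - 1))) (ord (x - 1))" by simp
  also have "\<dots> \<le> ord (x * v - 1)" unfolding eq by (rule ord_add)
  finally show ?thesis unfolding near_def .
qed

lemma near_inv:
  assumes k: "k \<ge> 1" and v: "near k v" shows "near k (inverse v)"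
proof -
  have vnz: "v \<noteq> 0" using near_nz[OF k v] .
  have "inverse v - 1 = (1 - v) / v" using vnz by (simp add: field_simps)
  then have "ord (inverse v - 1) = ord (1 - v) - ord v" using ord_divide[OF vnz] by simp
  then have "ord (inverse v - 1) = ord (v - 1) - ord v" using ord_sym[of 1 v] by simp
  also have "\<dots> = ord (v - 1)" using near_ord0[OF k v] by simp
  finally show ?thesis using v unfolding near_def by simp
qed

lemma ratio_near:
  assumes b: "b \<noteq> 0" and h: "dk k + ord b \<le> ord (b' - b)"
  shows "near k (b' / b)"
proof -
  have "b' / b - 1 = (b' - b) / b" using b by (simp add: field_simps)
  then have e: "ord (b' / b - 1) = ord (b' - b) - ord b" using ord_divide[OF b] by simp
  obtain s where s: "ord b = ereal s" using ord_fin[OF b] by (cases "ord b") auto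
  obtain r where r: "dk k = ereal r" using dk_fin by blast
  show ?thesis unfolding near_def e using h r s by (cases "ord (b' - b)") auto
qed


lemma near_def2: "near m x \<longleftrightarrow> ereal (of_nat m) * ord \<pi> \<le> ord (x - 1)"
  unfolding near_def dk_def ..

lemma Q_mult:
  assumes w: "w \<in> Qset ord \<pi> n m" and v: "near k v" and k: "k \<ge> 1" and km: "m \<le> k"
  shows "w * v \<in> Qset ord \<pi> n m"
proof -
  obtain a u where au: "a \<noteq> 0" "near m u" "w = a ^ n * u" and ac: "ac_one ord \<pi> m w"
    using w unfolding Qset_def near_def2 by blast
  obtain j :: int where j: "ord w = ereal (of_int j) * ord \<pi>" "near m (w * \<pi> powi (- j))"
    using ac unfolding ac_one_def near_def2 by blast
  have ov: "ord v = 0" using near_ord0[OF k v] .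
  have 1: "w * v = a ^ n * (u * v)" using au by simp
  have 2: "near m (u * v)" using near_mult[OF au(2) v km] .
  have 3: "ord (w * v) = ereal (of_int j) * ord \<pi>" using j ov by (simp add: ord_mult)
  have 4: "near m (w * v * \<pi> powi (- j))"
    using near_mult[OF j(2) v km] by (simp add: algebra_simps)
  show ?thesis unfolding Qset_def ac_one_def
    using 1 2 3 4 au(1) unfolding near_def2 by blast
qed

lemma Q_mult_iff:
  assumes v: "near k v" and k: "k \<ge> 1" and km: "m \<le> k"
  shows "w * v \<in> Qset ord \<pi> n m \<longleftrightarrow> w \<in> Qset ord \<pi> n m"
proof
  assume "w * v \<in> Qset ord \<pi> n m"
  then have "w * v * inverse v \<in> Qset ord \<pi> n m" using Q_mult[OF _ near_inv[OF k v] k km] by blast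
  moreover have "w * v * inverse v = w" using near_nz[OF k v] by (simp add: mult.assoc)
  ultimately show "w \<in> Qset ord \<pi> n m" by simp
qed (rule Q_mult[OF _ v k km])

lemma zero_notin_Q: "0 \<notin> Qset ord \<pi> n m"
proof -
  obtain p where "ord \<pi> = ereal p" using P_real by blast
  then show ?thesis unfolding Qset_def ac_one_def by auto
qed

lemma R_pres:
  assumes k: "k \<ge> 1" and km: "m \<le> k"
    and hb: "dk k + ord b \<le> ord (b' - b)" and hz: "dk k + ord z \<le> ord (z' - z)"
  shows "b \<in> (\<lambda>w. z * w) ` Qset ord \<pi> n m \<longleftrightarrow> b' \<in> (\<lambda>w. z' * w) ` Qset ord \<pi> n m"
proof (cases "z = 0")
  case True
  then have "z' = 0" using L1z[OF k hz] by simp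
  then show ?thesis using True L1z[OF k hb] by auto
next
  case False
  then have z': "z' \<noteq> 0" using L1z[OF k hz] by simp
  have img: "y \<in> (\<lambda>w. c * w) ` Qset ord \<pi> n m \<longleftrightarrow> y / c \<in> Qset ord \<pi> n m" if c: "c \<noteq> 0" for y c
  proof
    assume "y \<in> (\<lambda>w. c * w) ` Qset ord \<pi> n m"
    then show "y / c \<in> Qset ord \<pi> n m" using c by auto
  next
    assume "y / c \<in> Qset ord \<pi> n m"
    then show "y \<in> (\<lambda>w. c * w) ` Qset ord \<pi> n m" using c by (intro image_eqI[of _ _ "y / c"]) auto
  qed
  show ?thesis
  proof (cases "b = 0")
    case True
    then have "b' = 0" using L1z[OF k hb] by simp
    then show ?thesis using True img[OF False] img[OF z'] zero_notin_Q by simp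
  next
    case bnz: False
    define v where "v = (b' / b) * inverse (z' / z)"
    have nb: "near k (b' / b)" using ratio_near[OF bnz hb] .
    have nz: "near k (z' / z)" using ratio_near[OF False hz] .
    have nv: "near k v" unfolding v_def using near_mult[OF nb near_inv[OF k nz] order_refl] .
    have eq: "b' / z' = (b / z) * v" unfolding v_def using bnz False z' by (simp add: field_simps)
    have "b' / z' \<in> Qset ord \<pi> n m \<longleftrightarrow> (b / z) * v \<in> Qset ord \<pi> n m" by (simp only: eq)
    also have "\<dots> \<longleftrightarrow> b / z \<in> Qset ord \<pi> n m" by (rule Q_mult_iff[OF nv k km])
    finally show ?thesis using img[OF False] img[OF z'] by simp
  qed
qed

end

lemma ufilt_mono: "ufilt U \<Longrightarrow> A \<in> U \<Longrightarrow> A \<subseteq> B \<Longrightarrow> B \<in> U" unfolding ufilt_def by blast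
lemma ufilt_int: "ufilt U \<Longrightarrow> A \<in> U \<Longrightarrow> B \<in> U \<Longrightarrow> A \<inter> B \<in> U" unfolding ufilt_def by blast
lemma ufilt_UNIV: "ufilt U \<Longrightarrow> UNIV \<in> U"
proof -
  assume u: "ufilt U"
  have "finite (- (UNIV :: nat set))" by simp
  then show ?thesis using u unfolding ufilt_def by blast
qed
lemma ufilt_empty: "ufilt U \<Longrightarrow> {} \<notin> U" unfolding ufilt_def by blast
lemma ufilt_compl: "ufilt U \<Longrightarrow> - A \<in> U \<longleftrightarrow> A \<notin> U"
  unfolding ufilt_def by (metis Compl_disjoint)
lemma ufilt_Int_iff: "ufilt U \<Longrightarrow> A \<inter> B \<in> U \<longleftrightarrow> A \<in> U \<and> B \<in> U"
  using ufilt_int ufilt_mono by blast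
lemma ufilt_finite: "ufilt U \<Longrightarrow> finite A \<Longrightarrow> A \<notin> U"
  using ufilt_compl unfolding ufilt_def by (metis double_compl)
lemma ufilt_cong: "ufilt U \<Longrightarrow> G \<in> U \<Longrightarrow> (\<And>n. n \<in> G \<Longrightarrow> P n \<longleftrightarrow> Q n) \<Longrightarrow> {n. P n} \<in> U \<longleftrightarrow> {n. Q n} \<in> U"
proof -
  assume u: "ufilt U" and g: "G \<in> U" and pq: "\<And>n. n \<in> G \<Longrightarrow> P n \<longleftrightarrow> Q n"
  have "{n. P n} \<inter> G = {n. Q n} \<inter> G" using pq by blast
  then show ?thesis using ufilt_Int_iff[OF u] g by metis
qed

primrec maxm :: "'a fm \<Rightarrow> nat" where
  "maxm (Eq s t) = 0"
| "maxm (Dj j x y z t) = 0"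
| "maxm (Rnm n m x y z) = m"
| "maxm (Neg \<phi>) = maxm \<phi>"
| "maxm (Conj \<phi> \<psi>) = max (maxm \<phi>) (maxm \<psi>)"
| "maxm (Ex i \<phi>) = maxm \<phi>"

locale ssetup = vsetup ord \<pi> for ord :: "'a::field_char_0 \<Rightarrow> ereal" and \<pi> :: 'a +
  fixes K :: "'a set" and U :: "nat set set" and z :: "nat \<Rightarrow> 'a" and k :: nat
  assumes subK: "subfield K" and uf: "ufilt U" and k1: "k \<ge> 1" and znz: "\<And>n. z n \<noteq> 0"
    and zinj: "inj (\<lambda>n. ord (z n))"
begin

definition u :: 'a where "u = 1 + \<pi> ^ k"

lemma u1: "u - 1 = \<pi> ^ k" unfolding u_def by simp
lemma ord_u1: "ord (u - 1) = dk k" using ord_power unfolding u1 dk_def .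
lemma u_nz: "u \<noteq> 1"
  using u1 pi_nz by auto
lemma near_u: "near k u" unfolding near_def ord_u1 by simp
lemma u_nz0: "u \<noteq> 0" using near_nz[OF k1 near_u] .

definition inD :: "(nat \<Rightarrow> 'a) \<Rightarrow> bool" where
  "inD w \<longleftrightarrow> (\<exists>c\<in>K. c \<noteq> 0 \<and> {n. ord (z n) < ord (w n / c - z n)} \<in> U)"

definition Sig :: "(nat \<Rightarrow> 'a) \<Rightarrow> nat \<Rightarrow> 'a" where
  "Sig w = (if inD w then (\<lambda>n. u * w n) else w)"

definition SigA :: "(nat \<Rightarrow> nat \<Rightarrow> 'a) \<Rightarrow> nat \<Rightarrow> nat \<Rightarrow> 'a" where
  "SigA \<rho> = (\<lambda>n i. Sig (\<lambda>m. \<rho> m i) n)"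

lemma ord_mult_dk: "ord ((u - 1) * x) = dk k + ord x"
  using ord_mult ord_u1 by simp

lemma mixed_pw:
  assumes c: "c \<noteq> 0" and hb: "ord zz < ord (b / c - zz)" and ha: "\<not> ord zz < ord (a / c - zz)"
  shows "dk k + ord (b - a) \<le> ord (u * b - a - (b - a))"
proof -
  have e1: "u * b - a - (b - a) = (u - 1) * b" by (simp add: algebra_simps)
  have ob: "ord (b / c) = ord zz" using ord_strict2[OF hb] .
  have "ord (b / c - a / c) \<le> ord zz"
  proof (rule ccontr)
    assume "\<not> ord (b / c - a / c) \<le> ord zz"
    then have g: "ord zz < ord (b / c - a / c)" by simp
    have "a / c - zz = (b / c - zz) - (b / c - a / c)" by simp
    then have "min (ord (b / c - zz)) (ord (b / c - a / c)) \<le> ord (a / c - zz)" using ord_diff by metis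
    then show False using g hb ha by (simp add: min_def split: if_splits)
  qed
  then have "ord (b / c - a / c) \<le> ord (b / c)" using ob by simp
  moreover have "b / c - a / c = (b - a) / c" by (simp add: diff_divide_distrib)
  ultimately have le: "ord ((b - a) / c) \<le> ord (b / c)" by simp
  have "ord (b - a) \<le> ord b"
  proof -
    obtain s where s: "ord c = ereal s" using ord_fin[OF c] by (cases "ord c") auto
    have "ord (b - a) - ord c \<le> ord b - ord c" using le ord_divide[OF c] by simp
    then show ?thesis using s by (cases "ord (b - a)"; cases "ord b") simp_all
  qed
  then have "dk k + ord (b - a) \<le> dk k + ord b" by (rule add_left_mono)
  then show ?thesis unfolding e1 ord_mult_dk .
qed

lemma key: "{n. dk k + ord (b n - a n) \<le> ord ((Sig b n - Sig a n) - (b n - a n))} \<in> U"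
proof (cases "inD b"; cases "inD a")
  assume "inD b" "inD a"
  then have "\<And>n. (Sig b n - Sig a n) - (b n - a n) = (u - 1) * (b n - a n)"
    unfolding Sig_def by (simp add: algebra_simps)
  then have "{n. dk k + ord (b n - a n) \<le> ord ((Sig b n - Sig a n) - (b n - a n))} = UNIV"
    using ord_mult_dk by simp
  then show ?thesis using ufilt_UNIV[OF uf] by simp
next
  assume "\<not> inD b" "\<not> inD a"
  then have "{n. dk k + ord (b n - a n) \<le> ord ((Sig b n - Sig a n) - (b n - a n))} = UNIV"
    unfolding Sig_def by simp
  then show ?thesis using ufilt_UNIV[OF uf] by simp
next
  assume ib: "inD b" and ia: "\<not> inD a"
  then obtain c where c: "c \<in> K" "c \<noteq> 0" and S1: "{n. ord (z n) < ord (b n / c - z n)} \<in> U"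
    unfolding inD_def by blast
  have "{n. ord (z n) < ord (a n / c - z n)} \<notin> U" using ia c unfolding inD_def by blast
  then have S2: "- {n. ord (z n) < ord (a n / c - z n)} \<in> U" using ufilt_compl[OF uf] by blast
  have "{n. ord (z n) < ord (b n / c - z n)} \<inter> - {n. ord (z n) < ord (a n / c - z n)}
     \<subseteq> {n. dk k + ord (b n - a n) \<le> ord ((Sig b n - Sig a n) - (b n - a n))}"
    using mixed_pw[OF c(2)] ib ia unfolding Sig_def by auto
  then show ?thesis using ufilt_int[OF uf S1 S2] ufilt_mono[OF uf] by blast
next
  assume ib: "\<not> inD b" and ia: "inD a"
  then obtain c where c: "c \<in> K" "c \<noteq> 0" and S1: "{n. ord (z n) < ord (a n / c - z n)} \<in> U"
    unfolding inD_def by blast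
  have "{n. ord (z n) < ord (b n / c - z n)} \<notin> U" using ib c unfolding inD_def by blast
  then have S2: "- {n. ord (z n) < ord (b n / c - z n)} \<in> U" using ufilt_compl[OF uf] by blast
  have "dk k + ord (b n - a n) \<le> ord ((Sig b n - Sig a n) - (b n - a n))"
    if "ord (z n) < ord (a n / c - z n)" "\<not> ord (z n) < ord (b n / c - z n)" for n
  proof -
    have "dk k + ord (a n - b n) \<le> ord (u * a n - b n - (a n - b n))" using mixed_pw[OF c(2) that] .
    moreover have "ord (a n - b n) = ord (b n - a n)" by (rule ord_sym)
    moreover have "Sig b n = b n" "Sig a n = u * a n" using ib ia unfolding Sig_def by auto
    then have "(Sig b n - Sig a n) - (b n - a n) = - (u * a n - b n - (a n - b n))"
      by (simp add: algebra_simps)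
    then have "ord ((Sig b n - Sig a n) - (b n - a n)) = ord (u * a n - b n - (a n - b n))"
      by (metis ord_uminus)
    ultimately show ?thesis by simp
  qed
  then have "{n. ord (z n) < ord (a n / c - z n)} \<inter> - {n. ord (z n) < ord (b n / c - z n)}
     \<subseteq> {n. dk k + ord (b n - a n) \<le> ord ((Sig b n - Sig a n) - (b n - a n))}" by blast
  then show ?thesis using ufilt_int[OF uf S1 S2] ufilt_mono[OF uf] by blast
qed

lemma inD_scal:
  assumes c: "c \<in> K" "c \<noteq> 0" shows "inD (\<lambda>n. c * w n) \<longleftrightarrow> inD w"
proof
  assume "inD (\<lambda>n. c * w n)"
  then obtain d where d: "d \<in> K" "d \<noteq> 0" "{n. ord (z n) < ord (c * w n / d - z n)} \<in> U"
    unfolding inD_def by blast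
  have "d / c \<in> K" using d(1) c(1) subK unfolding subfield_def by (simp add: divide_inverse)
  moreover have "d / c \<noteq> 0" using d c by simp
  moreover have eq: "c * w n / d = w n / (d / c)" for n using c by simp
  moreover have "{n. ord (z n) < ord (w n / (d / c) - z n)} \<in> U"
    using d(3) by (simp only: eq)
  ultimately show "inD w" unfolding inD_def by blast
next
  assume "inD w"
  then obtain d where d: "d \<in> K" "d \<noteq> 0" "{n. ord (z n) < ord (w n / d - z n)} \<in> U"
    unfolding inD_def by blast
  have "d * c \<in> K" using d(1) c(1) subK unfolding subfield_def by simp
  moreover have "d * c \<noteq> 0" using d c by simp
  moreover have eq: "c * w n / (d * c) = w n / d" for n using c by simp
  moreover have "{n. ord (z n) < ord (c * w n / (d * c) - z n)} \<in> U"
    using d(3) by (simp only: eq)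
  ultimately show "inD (\<lambda>n. c * w n)" unfolding inD_def by blast
qed

lemma not_inD_0: "\<not> inD (\<lambda>n. 0)"
  unfolding inD_def using ufilt_empty[OF uf] by simp

lemma Sig_zero: "Sig (\<lambda>n. 0) = (\<lambda>n. 0)"
  unfolding Sig_def using not_inD_0 by simp

lemma Sig_scal: "c \<in> K \<Longrightarrow> Sig (\<lambda>n. c * w n) = (\<lambda>n. c * Sig w n)"
proof (cases "c = 0")
  case True then show ?thesis using Sig_zero by simp
next
  case False
  assume "c \<in> K"
  then have "inD (\<lambda>n. c * w n) = inD w" using inD_scal[OF _ False] by blast
  then show ?thesis unfolding Sig_def by (simp add: mult.left_commute)
qed

lemma ball_move:
  assumes h: "ord zz < ord (b - zz)" and g: "dk k + ord b \<le> ord (b' - b)"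
  shows "ord zz < ord (b' - zz)"
proof -
  have ob: "ord b = ord zz" using ord_strict2[OF h] .
  have zf: "zz \<noteq> 0" using h by auto
  obtain r where r: "dk k = ereal r" "r > 0" using dk_pos[OF k1] dk_fin[of k] by auto
  obtain s where s: "ord zz = ereal s" using ord_fin[OF zf] by (cases "ord zz") auto
  have g2: "ord zz < ord (b' - b)" using g ob r s by (cases "ord (b' - b)") auto
  have "min (ord (b - zz)) (ord (b' - b)) \<le> ord ((b - zz) + (b' - b))" by (rule ord_add)
  moreover have "(b - zz) + (b' - b) = b' - zz" by simp
  ultimately have "min (ord (b - zz)) (ord (b' - b)) \<le> ord (b' - zz)" by simp
  then show ?thesis using h g2 by (simp add: min_def split: if_splits)
qed

lemma inD_u: "inD (\<lambda>n. w n / u) \<longleftrightarrow> inD w"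
proof -
  have a: "dk k + ord x \<le> ord (x / u - x)" for x
  proof -
    have eq: "x / u - x = (u - 1) * (- x / u)" using u_nz0 by (simp add: field_simps)
    have o1: "ord (x / u - x) = dk k + ord (- x / u)" unfolding eq by (rule ord_mult_dk)
    have "ord (- x / u) = ord x - ord u" using ord_divide[OF u_nz0] by simp
    then have o2: "ord (- x / u) = ord x" using near_ord0[OF k1 near_u] by simp
    show ?thesis using o1 o2 by simp
  qed
  have b: "dk k + ord x \<le> ord (x * u - x)" for x
  proof -
    have eq: "x * u - x = (u - 1) * x" by (simp add: algebra_simps)
    show ?thesis unfolding eq ord_mult_dk by simp
  qed
  have "ord (z n) < ord (w n / u / c - z n) \<longleftrightarrow> ord (z n) < ord (w n / c - z n)" for n c
  proof
    assume h: "ord (z n) < ord (w n / u / c - z n)"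
    have "w n / u / c * u = w n / c" using u_nz0 by simp
    note R = ball_move[OF h b[of "w n / u / c"]]
    show "ord (z n) < ord (w n / c - z n)" using R unfolding \<open>w n / u / c * u = w n / c\<close> .
  next
    assume h: "ord (z n) < ord (w n / c - z n)"
    have "w n / c / u = w n / u / c" by simp
    note R = ball_move[OF h a[of "w n / c"]]
    show "ord (z n) < ord (w n / u / c - z n)" using R unfolding \<open>w n / c / u = w n / u / c\<close> .
  qed
  then show ?thesis unfolding inD_def by simp
qed

lemma Sig_surj: "\<exists>w. Sig w = w'"
proof (cases "inD w'")
  case True
  then have "Sig (\<lambda>n. w' n / u) = w'" unfolding Sig_def using inD_u u_nz0 by simp
  then show ?thesis by blast
next
  case False then show ?thesis unfolding Sig_def by (intro exI[of _ w']) simp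
qed

lemma eval_Sig: "tm_scalars t \<subseteq> K \<Longrightarrow> eval_tm (SigA \<rho> n) t = Sig (\<lambda>m. eval_tm (\<rho> m) t) n"
proof (induction t)
  case (Var i) then show ?case by (simp add: SigA_def)
next
  case (Scal c t)
  then have "c \<in> K" "tm_scalars t \<subseteq> K" by auto
  then show ?case using Scal.IH Sig_scal[of c "\<lambda>m. eval_tm (\<rho> m) t"] by simp
qed

lemma SigA_upd: "SigA (\<lambda>n. (\<rho> n)(i := a n)) n = (SigA \<rho> n)(i := Sig a n)"
  unfolding SigA_def by (rule ext) simp

lemma key2: "\<exists>G\<in>U. \<forall>n\<in>G. dk k + ord (b n - a n) \<le> ord ((Sig b n - Sig a n) - (b n - a n))"
  by (rule bexI[OF _ key[where a=a and b=b]]) simp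

theorem invariance:
  "wf_LK K \<phi> \<Longrightarrow> maxm \<phi> \<le> k \<Longrightarrow> ({n. sat ord \<pi> (\<rho> n) \<phi>} \<in> U \<longleftrightarrow> {n. sat ord \<pi> (SigA \<rho> n) \<phi>} \<in> U)"
proof (induction \<phi> arbitrary: \<rho>)
  case (Eq s t)
  define A where "A = (\<lambda>m. eval_tm (\<rho> m) s)"
  define B where "B = (\<lambda>m. eval_tm (\<rho> m) t)"
  have es: "eval_tm (SigA \<rho> n) s = Sig A n" "eval_tm (SigA \<rho> n) t = Sig B n" for n
    using eval_Sig Eq.prems(1) unfolding A_def B_def by auto
  obtain G where G: "G \<in> U" "\<forall>n\<in>G. dk k + ord (B n - A n) \<le> ord ((Sig B n - Sig A n) - (B n - A n))"
    using key2 by blast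
  have "A n = B n \<longleftrightarrow> Sig A n = Sig B n" if "n \<in> G" for n
    using L1z[OF k1 G(2)[rule_format, OF that]] by auto
  then have "{n. A n = B n} \<in> U \<longleftrightarrow> {n. Sig A n = Sig B n} \<in> U"
    by (rule ufilt_cong[OF uf G(1)])
  moreover have "{n. sat ord \<pi> (\<rho> n) (Eq s t)} = {n. A n = B n}" unfolding A_def B_def by simp
  moreover have "{n. sat ord \<pi> (SigA \<rho> n) (Eq s t)} = {n. Sig A n = Sig B n}" using es by simp
  ultimately show ?case by simp
next
  case (Dj j x y zt t)
  define X where "X = (\<lambda>m. eval_tm (\<rho> m) x)"
  define Y where "Y = (\<lambda>m. eval_tm (\<rho> m) y)"
  define Z where "Z = (\<lambda>m. eval_tm (\<rho> m) zt)"
  define T where "T = (\<lambda>m. eval_tm (\<rho> m) t)"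
  have es: "eval_tm (SigA \<rho> n) x = Sig X n" "eval_tm (SigA \<rho> n) y = Sig Y n"
     "eval_tm (SigA \<rho> n) zt = Sig Z n" "eval_tm (SigA \<rho> n) t = Sig T n" for n
    using eval_Sig Dj.prems(1) unfolding X_def Y_def Z_def T_def by auto
  obtain G1 where G1: "G1 \<in> U" "\<forall>n\<in>G1. dk k + ord (X n - Y n) \<le> ord ((Sig X n - Sig Y n) - (X n - Y n))"
    using key2 by blast
  obtain G2 where G2: "G2 \<in> U" "\<forall>n\<in>G2. dk k + ord (Z n - T n) \<le> ord ((Sig Z n - Sig T n) - (Z n - T n))"
    using key2 by blast
  have "ord (X n - Y n) < ord (Z n - T n) + ereal (of_int j) * ord \<pi> \<longleftrightarrow>
        ord (Sig X n - Sig Y n) < ord (Sig Z n - Sig T n) + ereal (of_int j) * ord \<pi>" if "n \<in> G1 \<inter> G2" for n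
    using L1[OF k1 G1(2)[rule_format]] L1[OF k1 G2(2)[rule_format]] that by simp
  then have "{n. ord (X n - Y n) < ord (Z n - T n) + ereal (of_int j) * ord \<pi>} \<in> U \<longleftrightarrow>
    {n. ord (Sig X n - Sig Y n) < ord (Sig Z n - Sig T n) + ereal (of_int j) * ord \<pi>} \<in> U"
    by (rule ufilt_cong[OF uf ufilt_int[OF uf G1(1) G2(1)]])
  moreover have "{n. sat ord \<pi> (\<rho> n) (Dj j x y zt t)} = {n. ord (X n - Y n) < ord (Z n - T n) + ereal (of_int j) * ord \<pi>}"
    unfolding X_def Y_def Z_def T_def by simp
  moreover have "{n. sat ord \<pi> (SigA \<rho> n) (Dj j x y zt t)} = {n. ord (Sig X n - Sig Y n) < ord (Sig Z n - Sig T n) + ereal (of_int j) * ord \<pi>}"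
    using es by simp
  ultimately show ?case by simp
next
  case (Rnm nn mm x y zt)
  define X where "X = (\<lambda>m. eval_tm (\<rho> m) x)"
  define Y where "Y = (\<lambda>m. eval_tm (\<rho> m) y)"
  define Z where "Z = (\<lambda>m. eval_tm (\<rho> m) zt)"
  have es: "eval_tm (SigA \<rho> n) x = Sig X n" "eval_tm (SigA \<rho> n) y = Sig Y n"
     "eval_tm (SigA \<rho> n) zt = Sig Z n" for n
    using eval_Sig Rnm.prems(1) unfolding X_def Y_def Z_def by auto
  have mk: "mm \<le> k" using Rnm.prems(2) by simp
  obtain G1 where G1: "G1 \<in> U" "\<forall>n\<in>G1. dk k + ord (Y n - X n) \<le> ord ((Sig Y n - Sig X n) - (Y n - X n))"
    using key2 by blast
  obtain G2 where G2: "G2 \<in> U" "\<forall>n\<in>G2. dk k + ord (Z n - 0) \<le> ord ((Sig Z n - Sig (\<lambda>n. 0) n) - (Z n - 0))"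
    using key2[of Z "\<lambda>n. 0"] by blast
  have "Y n - X n \<in> (\<lambda>w. Z n * w) ` Qset ord \<pi> nn mm \<longleftrightarrow>
        Sig Y n - Sig X n \<in> (\<lambda>w. Sig Z n * w) ` Qset ord \<pi> nn mm" if "n \<in> G1 \<inter> G2" for n
  proof -
    have h2: "dk k + ord (Z n) \<le> ord (Sig Z n - Z n)" using G2(2) that Sig_zero by simp
    show ?thesis using R_pres[OF k1 mk G1(2)[rule_format] h2] that by simp
  qed
  then have "{n. Y n - X n \<in> (\<lambda>w. Z n * w) ` Qset ord \<pi> nn mm} \<in> U \<longleftrightarrow>
     {n. Sig Y n - Sig X n \<in> (\<lambda>w. Sig Z n * w) ` Qset ord \<pi> nn mm} \<in> U"
    by (rule ufilt_cong[OF uf ufilt_int[OF uf G1(1) G2(1)]])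
  moreover have "{n. sat ord \<pi> (\<rho> n) (Rnm nn mm x y zt)} = {n. Y n - X n \<in> (\<lambda>w. Z n * w) ` Qset ord \<pi> nn mm}"
    unfolding X_def Y_def Z_def by simp
  moreover have "{n. sat ord \<pi> (SigA \<rho> n) (Rnm nn mm x y zt)} = {n. Sig Y n - Sig X n \<in> (\<lambda>w. Sig Z n * w) ` Qset ord \<pi> nn mm}"
    using es by simp
  ultimately show ?case by simp
next
  case (Neg \<phi>)
  have h: "{n. sat ord \<pi> (\<rho> n) \<phi>} \<in> U \<longleftrightarrow> {n. sat ord \<pi> (SigA \<rho> n) \<phi>} \<in> U"
    by (rule Neg.IH) (use Neg.prems in auto)
  have e1: "{n. sat ord \<pi> (\<rho> n) (Neg \<phi>)} = - {n. sat ord \<pi> (\<rho> n) \<phi>}" by auto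
  have e2: "{n. sat ord \<pi> (SigA \<rho> n) (Neg \<phi>)} = - {n. sat ord \<pi> (SigA \<rho> n) \<phi>}" by auto
  show ?case unfolding e1 e2 ufilt_compl[OF uf] using h by blast
next
  case (Conj \<phi> \<psi>)
  have h1: "{n. sat ord \<pi> (\<rho> n) \<phi>} \<in> U \<longleftrightarrow> {n. sat ord \<pi> (SigA \<rho> n) \<phi>} \<in> U"
    by (rule Conj.IH(1)) (use Conj.prems in auto)
  have h2: "{n. sat ord \<pi> (\<rho> n) \<psi>} \<in> U \<longleftrightarrow> {n. sat ord \<pi> (SigA \<rho> n) \<psi>} \<in> U"
    by (rule Conj.IH(2)) (use Conj.prems in auto)
  have e1: "{n. sat ord \<pi> (\<rho> n) (Conj \<phi> \<psi>)} = {n. sat ord \<pi> (\<rho> n) \<phi>} \<inter> {n. sat ord \<pi> (\<rho> n) \<psi>}" by auto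
  have e2: "{n. sat ord \<pi> (SigA \<rho> n) (Conj \<phi> \<psi>)} = {n. sat ord \<pi> (SigA \<rho> n) \<phi>} \<inter> {n. sat ord \<pi> (SigA \<rho> n) \<psi>}" by auto
  show ?case unfolding e1 e2 ufilt_Int_iff[OF uf] using h1 h2 by blast
next
  case (Ex i \<phi>)
  have IH: "{n. sat ord \<pi> (\<rho>' n) \<phi>} \<in> U \<longleftrightarrow> {n. sat ord \<pi> (SigA \<rho>' n) \<phi>} \<in> U" for \<rho>'
    by (rule Ex.IH) (use Ex.prems in auto)
  show ?case
  proof
    assume S: "{n. sat ord \<pi> (\<rho> n) (fm.Ex i \<phi>)} \<in> U"
    define a where "a = (\<lambda>n. SOME x. sat ord \<pi> ((\<rho> n)(i := x)) \<phi>)"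
    have "{n. sat ord \<pi> (\<rho> n) (fm.Ex i \<phi>)} \<subseteq> {n. sat ord \<pi> ((\<rho> n)(i := a n)) \<phi>}"
      unfolding a_def by (auto intro: someI)
    then have "{n. sat ord \<pi> ((\<rho> n)(i := a n)) \<phi>} \<in> U" using S ufilt_mono[OF uf] by blast
    then have "{n. sat ord \<pi> (SigA (\<lambda>n. (\<rho> n)(i := a n)) n) \<phi>} \<in> U"
      by (rule IH[of "\<lambda>n. (\<rho> n)(i := a n)", THEN iffD1])
    then have T: "{n. sat ord \<pi> ((SigA \<rho> n)(i := Sig a n)) \<phi>} \<in> U" using SigA_upd by simp
    show "{n. sat ord \<pi> (SigA \<rho> n) (fm.Ex i \<phi>)} \<in> U"
      by (rule ufilt_mono[OF uf T]) auto
  next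
    assume S: "{n. sat ord \<pi> (SigA \<rho> n) (fm.Ex i \<phi>)} \<in> U"
    define a' where "a' = (\<lambda>n. SOME x. sat ord \<pi> ((SigA \<rho> n)(i := x)) \<phi>)"
    obtain a where a: "Sig a = a'" using Sig_surj by blast
    have "{n. sat ord \<pi> (SigA \<rho> n) (fm.Ex i \<phi>)} \<subseteq> {n. sat ord \<pi> ((SigA \<rho> n)(i := a' n)) \<phi>}"
      unfolding a'_def by (auto intro: someI)
    then have "{n. sat ord \<pi> ((SigA \<rho> n)(i := a' n)) \<phi>} \<in> U" using S ufilt_mono[OF uf] by blast
    then have "{n. sat ord \<pi> (SigA (\<lambda>n. (\<rho> n)(i := a n)) n) \<phi>} \<in> U" using SigA_upd a by simp
    then have T: "{n. sat ord \<pi> ((\<rho> n)(i := a n)) \<phi>} \<in> U"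
      by (rule IH[of "\<lambda>n. (\<rho> n)(i := a n)", THEN iffD2])
    show "{n. sat ord \<pi> (\<rho> n) (fm.Ex i \<phi>)} \<in> U"
      by (rule ufilt_mono[OF uf T]) auto
  qed
qed

lemma notin_D:
  assumes "\<And>n. ord (w n) = C" shows "\<not> inD w"
proof
  assume "inD w"
  then obtain c where c: "c \<noteq> 0" and S: "{n. ord (z n) < ord (w n / c - z n)} \<in> U"
    unfolding inD_def by blast
  have sub: "{n. ord (z n) < ord (w n / c - z n)} \<subseteq> (\<lambda>n. ord (z n)) -` {C - ord c}"
  proof (rule subsetI)
    fix n assume "n \<in> {n. ord (z n) < ord (w n / c - z n)}"
    then have h: "ord (z n) < ord (w n / c - z n)" by simp
    have 1: "ord (w n / c) = ord (z n)" by (rule ord_strict2[OF h])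
    have 2: "ord (w n / c) = C - ord c" using ord_divide[OF c, of "w n"] assms[of n] by simp
    show "n \<in> (\<lambda>n. ord (z n)) -` {C - ord c}" using 1 2 by simp
  qed
  have fin: "finite ((\<lambda>n. ord (z n)) -` {C - ord c})"
    by (rule finite_vimageI) (simp, rule inj_on_subset[OF zinj], simp)
  have "finite {n. ord (z n) < ord (w n / c - z n)}" using finite_subset[OF sub fin] .
  then show False using S ufilt_finite[OF uf] by blast
qed

lemma inD_z: "inD z"
proof -
  have "ord (z n) < \<infinity>" for n using ord_fin[OF znz[of n]] by (cases "ord (z n)") auto
  then have "{n. ord (z n) < ord (z n / 1 - z n)} = UNIV" by simp
  moreover have "UNIV \<in> U" using ufilt_UNIV[OF uf] .
  moreover have "1 \<in> K" using subK unfolding subfield_def by simp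
  ultimately show ?thesis unfolding inD_def by (intro bexI[of _ 1]) auto
qed

end

lemma ord_pow_pos:
  assumes "is_valuation_on UNIV ord" "0 < ord \<pi>" "ord \<pi> \<noteq> \<infinity>"
  shows "ord (1 + (\<pi>::'a::field_char_0) ^ Suc n) = 0"
proof -
  interpret vsetup ord \<pi> using assms by unfold_locales
  obtain p where p: "ord \<pi> = ereal p" "p > 0" using P_real by blast
  have "ord 1 < ord (\<pi> ^ Suc n)" using ord_power[of "Suc n"] p by simp
  then show ?thesis using ord_strict[of 1] by simp
qed

theorem lemma4p2:
  fixes ord :: "'a::field_char_0 \<Rightarrow> ereal" and K :: "'a set" and \<pi> :: 'a and q q' :: nat
    and A :: "('a \<times> 'a \<times> 'a) set" and Proj :: "'a \<times> 'a \<times> 'a \<Rightarrow> 'a \<times> 'a"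
  assumes "FqZ_field UNIV ord q"
    and "K \<subseteq> UNIV" and "subfield K"
    and "FqZ_field K ord q'"
    and "uniformizer ord \<pi>"
    and "A = {(x, y, z). ord z = ord (y - x)}"
    and "Proj = (\<lambda>(x, y, z). (x, y))"
  shows "\<not> (\<exists>f :: 'a \<times> 'a \<Rightarrow> 'a \<times> 'a \<times> 'a.
            (\<forall>p \<in> Proj ` A. f p \<in> A \<and> Proj (f p) = p) \<and>
            LK_definable K ord \<pi> 5
              {[x, y, a, b, c] | x y a b c. (x, y) \<in> Proj ` A \<and> f (x, y) = (a, b, c)})"
proof
  assume "\<exists>f :: 'a \<times> 'a \<Rightarrow> 'a \<times> 'a \<times> 'a.
            (\<forall>p \<in> Proj ` A. f p \<in> A \<and> Proj (f p) = p) \<and>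
            LK_definable K ord \<pi> 5
              {[x, y, a, b, c] | x y a b c. (x, y) \<in> Proj ` A \<and> f (x, y) = (a, b, c)}"
  then obtain f :: "'a \<times> 'a \<Rightarrow> 'a \<times> 'a \<times> 'a" where
    fs: "\<forall>p \<in> Proj ` A. f p \<in> A \<and> Proj (f p) = p" and
    fd: "LK_definable K ord \<pi> 5 {[x, y, a, b, c] | x y a b c. (x, y) \<in> Proj ` A \<and> f (x, y) = (a, b, c)}"
    by blast
  have val: "is_valuation_on UNIV ord" using assms(1) unfolding FqZ_field_def by blast
  have Ppos: "0 < ord \<pi>" using assms(5) unfolding uniformizer_def by blast
  have Pfin: "ord \<pi> \<noteq> \<infinity>"
  proof -
    obtain e :: real where e: "e > 0" "ord ` (UNIV - {0}) = range (\<lambda>k::int. ereal (e * of_int k))"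
      using assms(1) unfolding FqZ_field_def value_group_Z_def by blast
    have "ereal (e * of_int (1::int)) \<in> ord ` (UNIV - {0})" using e(2) by blast
    then obtain x where "ereal (e * of_int (1::int)) = ord x" by (rule imageE)
    then have "ord x = ereal e" by simp
    moreover have "0 < ord x" using e(1) \<open>ord x = ereal e\<close> by simp
    ultimately have "ord \<pi> \<le> ereal e" using assms(5) unfolding uniformizer_def by metis
    then show ?thesis by auto
  qed
  interpret vsetup ord \<pi> using val Ppos Pfin by unfold_locales
  obtain p where p: "ord \<pi> = ereal p" "p > 0" using P_real by blast
  have PA: "Proj ` A = UNIV"
  proof -
    have "(x, y) \<in> Proj ` A" for x y
      using assms(6,7) by (intro image_eqI[of _ _ "(x, y, y - x)"]) auto
    then show ?thesis by auto
  qed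
  define g where "g x y = snd (snd (f (x, y)))" for x y
  have fxy: "f (x, y) = (x, y, g x y)" "ord (g x y) = ord (y - x)" for x y
  proof -
    have "f (x, y) \<in> A \<and> Proj (f (x, y)) = (x, y)" using fs PA by auto
    then show "f (x, y) = (x, y, g x y)" "ord (g x y) = ord (y - x)"
      using assms(6,7) unfolding g_def by (auto simp: case_prod_beta prod_eq_iff)
  qed
  define X where "X = {[x, y, a, b, c] | x y a b c. (x, y) \<in> Proj ` A \<and> f (x, y) = (a, b, c)}"
  have "\<exists>\<phi> (e :: nat \<Rightarrow> 'a). wf_LK K \<phi> \<and>
        (\<forall>xs. length xs = 5 \<longrightarrow> (xs \<in> X \<longleftrightarrow> sat ord \<pi> (\<lambda>i. if i < 5 then xs ! i else e i) \<phi>))"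
    using fd unfolding LK_definable_def X_def[symmetric] by (rule conjunct2)
  then obtain \<phi> and e :: "nat \<Rightarrow> 'a" where wf: "wf_LK K \<phi>" and
    dfn0: "\<forall>xs. length xs = 5 \<longrightarrow> (xs \<in> X \<longleftrightarrow> sat ord \<pi> (\<lambda>i. if i < 5 then xs ! i else e i) \<phi>)"
    by blast
  have dfn: "xs \<in> X \<longleftrightarrow> sat ord \<pi> (\<lambda>i. if i < 5 then xs ! i else e i) \<phi>" if "length xs = 5" for xs
    using dfn0 that by blast
  have memX: "[x, y, a, b, c] \<in> X \<longleftrightarrow> f (x, y) = (a, b, c)" for x y a b c
    unfolding X_def by (simp add: PA)
  define yv where "yv n = 1 + \<pi> ^ Suc n" for n
  define zz where "zz n = g 1 (yv n)" for n
  have ozz: "ord (zz n) = ereal (of_nat (Suc n)) * ord \<pi>" for n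
  proof -
    have "ord (zz n) = ord (yv n - 1)" unfolding zz_def by (rule fxy(2))
    also have "yv n - 1 = \<pi> ^ Suc n" unfolding yv_def by simp
    finally show ?thesis using ord_power[of "Suc n"] by simp
  qed
  have zznz: "zz n \<noteq> 0" for n using ozz[of n] p by auto
  have zzinj: "inj (\<lambda>n. ord (zz n))"
    by (rule injI) (use p in \<open>simp add: ozz\<close>)
  have oyv: "ord (yv n) = 0" for n unfolding yv_def using ord_pow_pos[OF val Ppos Pfin] .
  define k where "k = Suc (maxm \<phi>)"
  have mk: "maxm \<phi> \<le> k" by (simp add: k_def)
  obtain U where U: "ufilt U" using ufilt_exists by blast
  interpret S: ssetup ord \<pi> K U zz k
    using val Ppos Pfin assms(3) U zznz zzinj by unfold_locales (auto simp: k_def)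
  define \<rho> where "\<rho> n = (\<lambda>i. if i < 5 then [1, yv n, 1, yv n, zz n] ! i else e i)" for n
  have "sat ord \<pi> (\<rho> n) \<phi>" for n
  proof -
    have "[1, yv n, 1, yv n, zz n] \<in> X" using memX fxy(1) zz_def by simp
    then show ?thesis using dfn[of "[1, yv n, 1, yv n, zz n]"] unfolding \<rho>_def by simp
  qed
  then have "{n. sat ord \<pi> (\<rho> n) \<phi>} \<in> U" using ufilt_UNIV[OF U] by simp
  then have I: "{n. sat ord \<pi> (S.SigA \<rho> n) \<phi>} \<in> U"
    by (rule S.invariance[OF wf mk, THEN iffD1])
  have sig: "S.SigA \<rho> n = (\<lambda>i. if i < 5 then [1, yv n, 1, yv n, S.u * zz n] ! i else e i)" for n
  proof
    fix i
    show "S.SigA \<rho> n i = (if i < 5 then [1, yv n, 1, yv n, S.u * zz n] ! i else e i)"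
    proof (cases "i < 5")
      case False
      then have "(\<lambda>m. \<rho> m i) = (\<lambda>m. e i)" unfolding \<rho>_def by simp
      moreover have "\<not> S.inD (\<lambda>m. e i)" using S.notin_D[of "\<lambda>m. e i" "ord (e i)"] by simp
      ultimately show ?thesis using False unfolding S.SigA_def S.Sig_def by simp
    next
      case True
      then consider "i = 0" | "i = 1" | "i = 2" | "i = 3" | "i = 4" by linarith
      then show ?thesis
      proof cases
        case 1
        then have "(\<lambda>m. \<rho> m i) = (\<lambda>m. 1)" unfolding \<rho>_def by simp
        moreover have "\<not> S.inD (\<lambda>m. 1)" using S.notin_D[of "\<lambda>m. 1" 0] by simp
        ultimately show ?thesis using 1 unfolding S.SigA_def S.Sig_def by simp
      next
        case 2
        then have "(\<lambda>m. \<rho> m i) = yv" unfolding \<rho>_def by (simp add: fun_eq_iff)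
        moreover have "\<not> S.inD yv" using S.notin_D[of yv 0] oyv by simp
        ultimately show ?thesis using 2 unfolding S.SigA_def S.Sig_def by simp
      next
        case 3
        then have "(\<lambda>m. \<rho> m i) = (\<lambda>m. 1)" unfolding \<rho>_def by simp
        moreover have "\<not> S.inD (\<lambda>m. 1)" using S.notin_D[of "\<lambda>m. 1" 0] by simp
        ultimately show ?thesis using 3 unfolding S.SigA_def S.Sig_def by simp
      next
        case 4
        then have "(\<lambda>m. \<rho> m i) = yv" unfolding \<rho>_def by (simp add: fun_eq_iff)
        moreover have "\<not> S.inD yv" using S.notin_D[of yv 0] oyv by simp
        ultimately show ?thesis using 4 unfolding S.SigA_def S.Sig_def by simp
      next
        case 5
        then have "(\<lambda>m. \<rho> m i) = zz" unfolding \<rho>_def by (simp add: fun_eq_iff)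
        moreover have "\<rho> n 4 = zz n" unfolding \<rho>_def by simp
        ultimately show ?thesis using 5 S.inD_z unfolding S.SigA_def S.Sig_def by simp
      qed
    qed
  qed
  have "{n. sat ord \<pi> (S.SigA \<rho> n) \<phi>} \<noteq> {}" using I ufilt_empty[OF U] by metis
  then obtain n where "sat ord \<pi> (S.SigA \<rho> n) \<phi>" by blast
  then have "[1, yv n, 1, yv n, S.u * zz n] \<in> X"
    using dfn[of "[1, yv n, 1, yv n, S.u * zz n]"] sig[of n] by simp
  then have "f (1, yv n) = (1, yv n, S.u * zz n)" using memX by blast
  then have "zz n = S.u * zz n" using fxy(1) zz_def by simp
  then have "S.u = 1" using zznz[of n] by simp
  then show False using S.u_nz by simp
qed

end
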